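(* Let $\mathbf{x}=x_1x_2\ldots$ be an infinite word over a finite alphabet. The following statements are equivalent: (i) $\mathbf{x}$ is a Sturmian word; (ii) $r(n,\mathbf{x})\le 2n+1$ for all $n\ge1$, with equality for infinitely many $n$.
   Context: For integers $i\le j$, $x_i^j=x_ix_{i+1}\cdots x_j$. For $n\ge1$, $r(n,\mathbf{x})=\min\{m\ge1:\ x_i^{i+n-1}=x_{m-n+1}^{m}\text{ for some } 1\le i\le m-n\}$. The subword complexity $p(n,\mathbf{x})$ is the number of distinct factors of length $n$ of $\mathbf{x}$; a Sturmian word is an infinite word with $p(n,\mathbf{x})=n+1$ for every $n\ge1$. *)

theory Defs
  imports Main
begin

text \<open>An infinite word x = x_1 x_2 ... is modelled as a function nat => 'a;
  only positions >= 1 are used (position 0 is ignored).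
  fac x i n is the factor x_i^{i+n-1} = x_i x_{i+1} ... x_{i+n-1} (length n).\<close>

definition fac :: "(nat \<Rightarrow> 'a) \<Rightarrow> nat \<Rightarrow> nat \<Rightarrow> 'a list" where
  "fac x i n = map (\<lambda>k. x (i + k)) [0..<n]"

definition rec_fn :: "nat \<Rightarrow> (nat \<Rightarrow> 'a) \<Rightarrow> nat" where
  "rec_fn n x = (LEAST m. 1 \<le> m \<and>
      (\<exists>i. 1 \<le> i \<and> i + n \<le> m \<and> fac x i n = fac x (m - n + 1) n))"

definition subword_complexity :: "nat \<Rightarrow> (nat \<Rightarrow> 'a) \<Rightarrow> nat" where
  "subword_complexity n x = card {fac x i n | i. 1 \<le> i}"

definition sturmian :: "(nat \<Rightarrow> 'a) \<Rightarrow> bool" where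
  "sturmian x \<longleftrightarrow> (\<forall>n\<ge>1. subword_complexity n x = n + 1)"

end

theory Submission
  imports Defs
begin


definition sig :: "(nat \<Rightarrow> 'a) \<Rightarrow> nat \<Rightarrow> nat" where
  "sig x n = rec_fn n x + 1 - n"
definition per :: "(nat \<Rightarrow> 'a) \<Rightarrow> nat \<Rightarrow> nat \<Rightarrow> nat \<Rightarrow> bool" where
  "per x a b q \<longleftrightarrow> (\<forall>l. a \<le> l \<longrightarrow> l + q \<le> b \<longrightarrow> x l = x (l + q))"
definition uper :: "(nat \<Rightarrow> 'a) \<Rightarrow> bool" where
  "uper x \<longleftrightarrow> (\<exists>i q. 1 \<le> i \<and> 0 < q \<and> (\<forall>l. x (i + l) = x (i + q + l)))"

lemma fac_eq_iff: "fac x i n = fac x j n \<longleftrightarrow> (\<forall>k<n. x (i+k) = x (j+k))"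
  unfolding fac_def by (auto simp: map_eq_conv)

lemma fac_Suc: "fac x i (Suc n) = fac x i n @ [x (i+n)]"
  by (simp add: fac_def)

lemma finite_F: "finite {fac (x::nat \<Rightarrow> 'a::finite) i n | i. 1 \<le> i}"
proof -
  have "{fac x i n | i. 1 \<le> i} \<subseteq> {xs. set xs \<subseteq> UNIV \<and> length xs = n}"
    by (auto simp: fac_def)
  moreover have "finite {xs::'a list. set xs \<subseteq> UNIV \<and> length xs = n}"
    by (rule finite_lists_length_eq) simp
  ultimately show ?thesis by (rule finite_subset)
qed

lemma exists_rep: "\<exists>a b. 1 \<le> a \<and> a < b \<and> fac (x::nat \<Rightarrow> 'a::finite) a n = fac x b n"
proof -
  let ?f = "\<lambda>i. fac x i n"
  have inf: "infinite {1::nat..}" by (simp add: infinite_Ici)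
  have "\<not> inj_on ?f {1..}"
  proof
    assume "inj_on ?f {1..}"
    moreover have "?f ` {1..} \<subseteq> {fac x i n | i. 1 \<le> i}" by auto
    ultimately have "finite {1::nat..}" using inj_on_finite finite_F by blast
    with inf show False by simp
  qed
  then obtain a b where ab: "a \<in> {1..}" "b \<in> {1..}" "a \<noteq> b" "?f a = ?f b"
    unfolding inj_on_def by blast
  show ?thesis
  proof (cases "a < b")
    case True then show ?thesis using ab by auto
  next
    case False then show ?thesis using ab by (intro exI[of _ b] exI[of _ a]) auto
  qed
qed

lemma sig_props:
  fixes x :: "nat \<Rightarrow> 'a::finite"
  shows "2 \<le> sig x n" "\<exists>i. 1 \<le> i \<and> i < sig x n \<and> fac x i n = fac x (sig x n) n"
    "rec_fn n x = sig x n + n - 1"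
proof -
  let ?P = "\<lambda>m. 1 \<le> m \<and> (\<exists>i. 1 \<le> i \<and> i + n \<le> m \<and> fac x i n = fac x (m - n + 1) n)"
  obtain a b where ab: "1 \<le> a" "a < b" "fac x a n = fac x b n" using exists_rep by blast
  have "?P (b + n - 1)" using ab by (intro conjI exI[of _ a]) auto
  then have P: "?P (rec_fn n x)" unfolding rec_fn_def by (rule LeastI)
  then obtain i where i: "1 \<le> i" "i + n \<le> rec_fn n x" "fac x i n = fac x (rec_fn n x - n + 1) n"
    by blast
  show "2 \<le> sig x n" using i unfolding sig_def by auto
  show "\<exists>i. 1 \<le> i \<and> i < sig x n \<and> fac x i n = fac x (sig x n) n"
    using i unfolding sig_def by (intro exI[of _ i]) (auto simp: add.commute Suc_diff_le)
  show "rec_fn n x = sig x n + n - 1" using i unfolding sig_def by auto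
qed

lemma sig_le:
  assumes "1 \<le> a" "a < b" "fac x a n = fac x b n"
  shows "sig x n \<le> b"
proof -
  let ?P = "\<lambda>m. 1 \<le> m \<and> (\<exists>i. 1 \<le> i \<and> i + n \<le> m \<and> fac x i n = fac x (m - n + 1) n)"
  have "?P (b + n - 1)" using assms by (intro conjI exI[of _ a]) auto
  then have "rec_fn n x \<le> b + n - 1" unfolding rec_fn_def by (rule Least_le)
  then show ?thesis unfolding sig_def using assms by arith
qed

lemma sig_mono_Suc: "sig (x::nat \<Rightarrow> 'a::finite) m \<le> sig x (Suc m)"
proof -
  obtain i where i: "1 \<le> i" "i < sig x (Suc m)" "fac x i (Suc m) = fac x (sig x (Suc m)) (Suc m)"
    using sig_props(2) by blast
  then have "fac x i m = fac x (sig x (Suc m)) m" by (simp add: fac_Suc)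
  then show ?thesis using i sig_le by blast
qed

lemma sig_mono: "m \<le> n \<Longrightarrow> sig (x::nat \<Rightarrow> 'a::finite) m \<le> sig x n"
  by (rule lift_Suc_mono_le[of "sig x"]) (auto intro: sig_mono_Suc)



lemma per_mono: "per x a b p \<Longrightarrow> a \<le> a' \<Longrightarrow> b' \<le> b \<Longrightarrow> per x a' b' p"
  unfolding per_def by auto

lemma per_shift: "per x a b p \<Longrightarrow> a \<le> u \<Longrightarrow> u + k*p \<le> b \<Longrightarrow> x u = x (u + k*p)"
proof (induction k)
  case 0 then show ?case by simp
next
  case (Suc k)
  then have "x u = x (u + k*p)" by simp
  also have "\<dots> = x (u + k*p + p)" using Suc.prems unfolding per_def by auto
  finally show ?case by (simp add: algebra_simps)
qed

lemma per_cong: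
  assumes "per x a b p" "a \<le> u" "a \<le> v" "u \<le> b" "v \<le> b" "u mod p = v mod p"
  shows "x u = x v"
proof -
  have gen: "x u = x v" if "u \<le> v" "a \<le> u" "v \<le> b" "u mod p = v mod p" for u v
  proof -
    have "p dvd v - u" using that by (metis mod_eq_dvd_iff_nat)
    then obtain k where k: "v - u = p * k" by blast
    then have "v = u + k * p" using that by (simp add: mult.commute)
    then show ?thesis using per_shift[OF assms(1) that(2)] that by simp
  qed
  show ?thesis
  proof (cases "u \<le> v")
    case True then show ?thesis using gen assms by blast
  next
    case False then show ?thesis using gen[of v u] assms by simp
  qed
qed

lemma mod_rep: "d dvd p \<Longrightarrow> 0 < p \<Longrightarrow> (c + (y + p*c - c) mod p) mod d = (y::nat) mod d"
proof -
  assume d: "d dvd p" and p: "0 < p"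
  have "c \<le> p*c" using p by simp
  then have cle: "c \<le> y + p*c" by linarith
  have "(c + (y + p*c - c) mod p) mod d = (c + (y + p*c - c)) mod d"
    by (metis mod_add_eq mod_mod_cancel[OF d])
  also have "\<dots> = (y + p*c) mod d" using cle by simp
  also have "\<dots> = y mod d"
  proof -
    obtain k where "p = d * k" using d by blast
    then show ?thesis by (simp add: mult.assoc)
  qed
  finally show ?thesis .
qed

lemma per_extend:
  assumes "per x a b p" "per x c e d" "a \<le> c" "e \<le> b" "c + p \<le> e + 1" "d dvd p" "0 < p"
  shows "per x a b d"
  unfolding per_def
proof (intro allI impI)
  fix l assume l: "a \<le> l" "l + d \<le> b"
  define l1 where "l1 = c + (l + p*c - c) mod p"
  define l2 where "l2 = c + (l + d + p*c - c) mod p"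
  have l1b: "c \<le> l1" "l1 \<le> e" using assms(5,7) unfolding l1_def
    using mod_less_divisor[OF assms(7), of "l + p*c - c"] by auto
  have l2b: "c \<le> l2" "l2 \<le> e" using assms(5,7) unfolding l2_def
    using mod_less_divisor[OF assms(7), of "l + d + p*c - c"] by auto
  have "x l = x l1"
    by (rule per_cong[OF assms(1)]) (use l l1b assms(3,4) mod_rep[of p p c l, OF _ assms(7)] in \<open>auto simp: l1_def\<close>)
  also have "x l1 = x l2"
    by (rule per_cong[OF assms(2)]) (use l1b l2b mod_rep[OF assms(6,7), of c l] mod_rep[OF assms(6,7), of c "l+d"] in \<open>auto simp: l1_def l2_def\<close>)
  also have "x l2 = x (l + d)"
    by (rule per_cong[OF assms(1)]) (use l l2b assms(3,4) mod_rep[of p p c "l+d", OF _ assms(7)] in \<open>auto simp: l2_def\<close>)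
  finally show "x l = x (l + d)" .
qed



lemma fine_wilf:
  "0 < p \<Longrightarrow> 0 < q \<Longrightarrow> c + p + q \<le> e + 2 \<Longrightarrow> per x c e p \<Longrightarrow> per x c e q
   \<Longrightarrow> per x c e (gcd p q)"
proof (induction "p + q" arbitrary: p q e rule: less_induct)
  case less
  show ?case
  proof (cases "p = q")
    case True then show ?thesis using less.prems by simp
  next
    case False
    show ?thesis
    proof (cases "p < q")
      case True
      have ep: "p \<le> e" using less.prems True by linarith
      have A: "per x c (e - p) (q - p)" unfolding per_def
      proof (intro allI impI)
        fix l assume l: "c \<le> l" "l + (q - p) \<le> e - p"
        have "x l = x (l + q)" using less.prems(5) l True ep unfolding per_def by auto
        also have "\<dots> = x (l + (q - p))"
        proof -
          have eq: "l + (q - p) + p = l + q" using True by simp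
          have "c \<le> l + (q - p)" "l + (q - p) + p \<le> e" using l ep by linarith+
          then have "x (l + (q - p)) = x (l + (q - p) + p)"
            using less.prems(4) unfolding per_def by blast
          then show ?thesis using eq by simp
        qed
        finally show "x l = x (l + (q - p))" .
      qed
      have B: "per x c (e - p) p" using less.prems(4) by (rule per_mono) auto
      have "per x c (e - p) (gcd p (q - p))"
        by (rule less.hyps[of p "q - p"]) (use less.prems True ep A B in auto)
      moreover have "gcd p (q - p) = gcd p q"
        using gcd_diff1_nat[of p q] True by (simp add: gcd.commute)
      ultimately have D: "per x c (e - p) (gcd p q)" by simp
      show ?thesis
        by (rule per_extend[OF less.prems(4) D]) (use less.prems True ep in auto)
    next
      case False
      then have True: "q < p" using \<open>p \<noteq> q\<close> by simp
      have ep: "q \<le> e" using less.prems True by linarith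
      have A: "per x c (e - q) (p - q)" unfolding per_def
      proof (intro allI impI)
        fix l assume l: "c \<le> l" "l + (p - q) \<le> e - q"
        have "x l = x (l + p)" using less.prems(4) l True ep unfolding per_def by auto
        also have "\<dots> = x (l + (p - q))"
        proof -
          have eq: "l + (p - q) + q = l + p" using True by simp
          have "c \<le> l + (p - q)" "l + (p - q) + q \<le> e" using l ep by linarith+
          then have "x (l + (p - q)) = x (l + (p - q) + q)"
            using less.prems(5) unfolding per_def by blast
          then show ?thesis using eq by simp
        qed
        finally show "x l = x (l + (p - q))" .
      qed
      have B: "per x c (e - q) q" using less.prems(5) by (rule per_mono) auto
      have "per x c (e - q) (gcd q (p - q))"
        by (rule less.hyps[of q "p - q"]) (use less.prems True ep A B in auto)
      moreover have "gcd q (p - q) = gcd p q"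
        using gcd_diff1_nat[of q p] True by (simp add: gcd.commute)
      ultimately have D: "per x c (e - q) (gcd p q)" by simp
      show ?thesis
        by (rule per_extend[OF less.prems(5) D]) (use less.prems True ep in auto)
    qed
  qed
qed



lemma uper_mod:
  fixes x :: "nat \<Rightarrow> 'b" and i q l :: nat
  assumes "\<forall>l. x (i + l) = x (i + q + l)" "0 < q"
  shows "x (i + l) = x (i + l mod q)"
proof (induction l rule: less_induct)
  case (less l)
  show ?case
  proof (cases "l < q")
    case True then show ?thesis by simp
  next
    case False
    then have "x (i + l) = x (i + q + (l - q))" by simp
    also have "\<dots> = x (i + (l - q))" using assms(1) by simp
    also have "\<dots> = x (i + (l - q) mod q)" using less.IH[of "l - q"] False assms(2) by simp
    also have "(l - q) mod q = l mod q" using False by (simp add: le_mod_geq)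
    finally show ?thesis .
  qed
qed

lemma uper_p_bounded:
  fixes x :: "nat \<Rightarrow> 'a::finite"
  assumes "uper x"
  shows "\<exists>C. \<forall>n. subword_complexity n x \<le> C"
proof -
  obtain i q where iq: "1 \<le> i" "0 < q" "\<forall>l. x (i + l) = x (i + q + l)"
    using assms unfolding uper_def by blast
  have "subword_complexity n x \<le> i + q" for n
  proof -
    have sub: "{fac x t n | t. 1 \<le> t} \<subseteq> (\<lambda>t. fac x t n) ` {1..<i+q}"
    proof
      fix w assume "w \<in> {fac x t n | t. 1 \<le> t}"
      then obtain t where t: "1 \<le> t" "w = fac x t n" by blast
      show "w \<in> (\<lambda>t. fac x t n) ` {1..<i+q}"
      proof (cases "t < i + q")
        case True then show ?thesis using t by auto
      next
        case False
        define t' where "t' = i + (t - i) mod q"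
        have t'b: "t' \<in> {1..<i+q}" using iq unfolding t'_def by auto
        have "fac x t n = fac x t' n"
          unfolding fac_eq_iff
        proof (intro allI impI)
          fix k assume "k < n"
          have "x (t + k) = x (i + (t - i + k))" using False by simp
          also have "\<dots> = x (i + (t - i + k) mod q)" by (rule uper_mod[OF iq(3,2)])
          also have "\<dots> = x (i + ((t - i) mod q + k) mod q)" by (simp add: mod_add_left_eq)
          also have "\<dots> = x (i + ((t - i) mod q + k))" by (rule uper_mod[OF iq(3,2), symmetric])
          also have "\<dots> = x (t' + k)" unfolding t'_def by (simp add: add.assoc)
          finally show "x (t + k) = x (t' + k)" .
        qed
        then show ?thesis using t t'b by auto
      qed
    qed
    have "card {fac x t n | t. 1 \<le> t} \<le> card ((\<lambda>t. fac x t n) ` {1..<i+q})"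
      by (rule card_mono[OF _ sub]) simp
    also have "\<dots> \<le> card {1..<i+q}" by (rule card_image_le) simp
    also have "\<dots> \<le> i + q" by simp
    finally show ?thesis unfolding subword_complexity_def .
  qed
  then show ?thesis by blast
qed

lemma uper_sig_bounded:
  assumes "uper x"
  shows "\<exists>C. \<forall>n. sig x n \<le> C"
proof -
  obtain i q where iq: "1 \<le> i" "0 < q" "\<forall>l. x (i + l) = x (i + q + l)"
    using assms unfolding uper_def by blast
  have "sig x n \<le> i + q" for n
    by (rule sig_le) (use iq in \<open>auto simp: fac_eq_iff\<close>)
  then show ?thesis by blast
qed

lemma sig_const_uper:
  fixes x :: "nat \<Rightarrow> 'a::finite"
  assumes "\<forall>m\<ge>N. sig x m = s0"
  shows "uper x"
proof (rule ccontr)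
  assume nu: "\<not> uper x"
  have "\<forall>i\<in>{1..<s0}. \<exists>l. x (i + l) \<noteq> x (s0 + l)"
  proof
    fix i assume i: "i \<in> {1..<s0}"
    show "\<exists>l. x (i + l) \<noteq> x (s0 + l)"
    proof (rule ccontr)
      assume "\<not> ?thesis"
      then have "\<forall>l. x (i + l) = x (i + (s0 - i) + l)" using i by auto
      then have "uper x" unfolding uper_def using i by (intro exI[of _ i] exI[of _ "s0 - i"]) auto
      then show False using nu by blast
    qed
  qed
  from bchoice[OF this] obtain f where f: "\<forall>i\<in>{1..<s0}. x (i + f i) \<noteq> x (s0 + f i)"
    by blast
  define M where "M = N + (\<Sum>i\<in>{1..<s0}. f i) + 1"
  obtain i where i: "1 \<le> i" "i < sig x M" "fac x i M = fac x (sig x M) M"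
    using sig_props(2) by blast
  have sM: "sig x M = s0" using assms M_def by simp
  have "f i \<le> (\<Sum>i\<in>{1..<s0}. f i)" using i sM by (intro member_le_sum) auto
  then have "f i < M" unfolding M_def by simp
  then have "x (i + f i) = x (s0 + f i)" using i sM by (simp add: fac_eq_iff)
  then show False using f i sM by auto
qed



lemma take_fac: "take k (fac x i (Suc k)) = fac x i k"
  by (simp add: fac_Suc fac_def)

lemma morse:
  fixes x :: "nat \<Rightarrow> 'a::finite"
  assumes nu: "\<not> uper x"
  shows "subword_complexity k x < subword_complexity (Suc k) x"
proof (rule ccontr)
  assume "\<not> ?thesis"
  then have le: "card {fac x i (Suc k) | i. 1 \<le> i} \<le> card {fac x i k | i. 1 \<le> i}"
    unfolding subword_complexity_def by simp
  let ?A = "{fac x i (Suc k) | i. 1 \<le> i}"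
  have img: "take k ` ?A = {fac x i k | i. 1 \<le> i}"
    by (auto simp: take_fac image_iff) (metis take_fac)
  have "card (take k ` ?A) = card ?A"
    using le img card_image_le[OF finite_F, of "take k" x "Suc k"] by simp
  then have inj: "inj_on (take k) ?A" by (rule eq_card_imp_inj_on[OF finite_F])
  have ext: "x (a + k) = x (b + k)" if "1 \<le> a" "1 \<le> b" "fac x a k = fac x b k" for a b
  proof -
    have "fac x a (Suc k) \<in> ?A" "fac x b (Suc k) \<in> ?A" using that by auto
    moreover have "take k (fac x a (Suc k)) = take k (fac x b (Suc k))"
      using that by (simp add: take_fac)
    ultimately have "fac x a (Suc k) = fac x b (Suc k)" using inj unfolding inj_on_def by blast
    then show ?thesis by (simp add: fac_Suc)
  qed
  obtain a b where ab: "1 \<le> a" "a < b" "fac x a k = fac x b k" using exists_rep by blast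
  have all: "fac x (a + l) k = fac x (b + l) k" for l
  proof (induction l)
    case 0 then show ?case using ab by simp
  next
    case (Suc l)
    have e: "x (a + l + k) = x (b + l + k)" using ext[of "a + l" "b + l"] Suc ab by simp
    show ?case unfolding fac_eq_iff
    proof (intro allI impI)
      fix t assume t: "t < k"
      show "x (a + Suc l + t) = x (b + Suc l + t)"
      proof (cases "Suc t < k")
        case True
        then have "x (a + l + Suc t) = x (b + l + Suc t)" using Suc.IH unfolding fac_eq_iff by blast
        then show ?thesis by simp
      next
        case False
        then have "Suc t = k" using t by simp
        then have h1: "a + Suc l + t = a + l + k" and h2: "b + Suc l + t = b + l + k" by simp_all
        show ?thesis unfolding h1 h2 by (rule e)
      qed
    qed
  qed
  have "\<forall>l. x (a + k + l) = x (a + k + (b - a) + l)"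
  proof
    fix l
    have "x (a + l + k) = x (b + l + k)" using ext[of "a + l" "b + l"] all[of l] ab by simp
    then show "x (a + k + l) = x (a + k + (b - a) + l)" using ab by (simp add: algebra_simps)
  qed
  then have "uper x" unfolding uper_def using ab by (intro exI[of _ "a + k"] exI[of _ "b - a"]) auto
  then show False using nu by blast
qed

lemma p0: "subword_complexity 0 x = 1"
proof -
  have "{fac x i 0 | i. 1 \<le> i} = {[]}" by (auto simp: fac_def)
  then show ?thesis unfolding subword_complexity_def by simp
qed

lemma p_gap:
  fixes x :: "nat \<Rightarrow> 'a::finite"
  assumes nu: "\<not> uper x" and mn: "m \<le> n"
  shows "subword_complexity m x + (n - m) \<le> subword_complexity n x"
  using mn
proof (induction n rule: dec_induct)
  case base then show ?case by simp
next
  case (step n)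
  then show ?case using morse[OF nu, of n] by simp
qed

lemma p_ge:
  fixes x :: "nat \<Rightarrow> 'a::finite"
  assumes nu: "\<not> uper x"
  shows "n + 1 \<le> subword_complexity n x"
  using p_gap[OF nu, of 0 n] p0[of x] by simp



lemma per_of_fac: "fac x i n = fac x j n \<Longrightarrow> i \<le> j \<Longrightarrow> 1 \<le> i \<Longrightarrow> per x i (j + n - 1) (j - i)"
  unfolding per_def fac_eq_iff
proof (intro allI impI)
  fix l assume h: "\<forall>k<n. x (i + k) = x (j + k)" "i \<le> j" "1 \<le> i" "i \<le> l" "l + (j - i) \<le> j + n - 1"
  have "l - i < n" using h(2,3,4,5) by arith
  then have "x (i + (l - i)) = x (j + (l - i))" using h(1) by blast
  moreover have "i + (l - i) = l" "j + (l - i) = l + (j - i)" using h(2,4) by linarith+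
  ultimately show "x l = x (l + (j - i))" by simp
qed

lemma jump:
  fixes x :: "nat \<Rightarrow> 'a::finite"
  assumes lt: "sig x m < sig x (Suc m)"
  shows "m + 3 \<le> sig x (Suc m)"
proof (rule ccontr)
  assume nle: "\<not> ?thesis"
  define s where "s = sig x m"
  define s' where "s' = sig x (Suc m)"
  obtain i where i: "1 \<le> i" "i < s" "fac x i m = fac x s m"
    using sig_props(2)[of x m] unfolding s_def by blast
  obtain j where j: "1 \<le> j" "j < s'" "fac x j (Suc m) = fac x s' (Suc m)"
    using sig_props(2)[of x "Suc m"] unfolding s'_def by blast
  have s'le: "s' \<le> m + 2" using nle unfolding s'_def by simp
  have lt': "s < s'" using lt unfolding s_def s'_def .
  have neq: "x (i + m) \<noteq> x (s + m)"
  proof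
    assume "x (i + m) = x (s + m)"
    then have "fac x i (Suc m) = fac x s (Suc m)" using i by (simp add: fac_Suc)
    then have "s' \<le> s" unfolding s'_def using sig_le i by blast
    then show False using lt' by simp
  qed
  define q where "q = s - i"
  define p where "p = s' - j"
  have q0: "0 < q" "1 \<le> q" using i unfolding q_def by auto
  have p0: "0 < p" using j unfolding p_def by auto
  have perq: "per x i (s + m - 1) q" unfolding q_def using per_of_fac[OF i(3)] i by simp
  have perp: "per x j (s' + Suc m - 1) p" unfolding p_def using per_of_fac[OF j(3)] j by simp
  define c where "c = max i j"
  define e where "e = s + m - 1"
  have s2: "2 \<le> s" using sig_props(1)[of x m] unfolding s_def .
  have len: "c + p + q \<le> e + 2"
  proof (cases "i \<le> j")
    case True then have "c = j" unfolding c_def by simp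
    then show ?thesis unfolding e_def p_def q_def using s'le i j lt' s2 by linarith
  next
    case False then have "c = i" unfolding c_def by simp
    then show ?thesis unfolding e_def p_def q_def using s'le i j lt' s2 by linarith
  qed
  have pq_c: "per x c e q" by (rule per_mono[OF perq]) (auto simp: c_def e_def)
  have pp_c: "per x c e p" by (rule per_mono[OF perp]) (use lt' in \<open>auto simp: c_def e_def\<close>)
  have fw: "per x c e (gcd p q)" by (rule fine_wilf[OF p0 q0(1) len pp_c pq_c])
  have ext: "per x j (s' + Suc m - 1) (gcd p q)"
    by (rule per_extend[OF perp fw]) (use len q0 lt' p0 in \<open>auto simp: c_def e_def\<close>)
  have dq: "q div gcd p q * gcd p q = q" by simp
  have "x (i + m) = x (i + m + q div gcd p q * gcd p q)"
    by (rule per_shift[OF ext]) (use dq j s'le i lt' in \<open>auto simp: q_def\<close>)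
  also have "i + m + q div gcd p q * gcd p q = s + m" using dq i unfolding q_def by simp
  finally show False using neq by simp
qed

lemma covering:
  fixes x :: "nat \<Rightarrow> 'a::finite"
  assumes le: "\<forall>m. sig x m \<le> m + 2" and eqn: "sig x n = n + 2"
    and unb: "\<forall>t. \<exists>m. t < sig x m"
  shows "1 \<le> t \<Longrightarrow> \<exists>j. 1 \<le> j \<and> j \<le> n + 1 \<and> fac x t n = fac x j n"
proof (induction t rule: less_induct)
  case (less t)
  show ?case
  proof (cases "t \<le> n + 1")
    case True then show ?thesis using less.prems by blast
  next
    case False
    define M where "M = (LEAST M. t < sig x M)"
    have M: "t < sig x M" unfolding M_def using unb by (meson LeastI)
    have nM: "n < M"
    proof (rule ccontr)
      assume "\<not> n < M"
      then have "sig x M \<le> sig x n" by (intro sig_mono) simp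
      then show False using M eqn False by simp
    qed
    then obtain m where Mm: "M = Suc m" and mn: "n \<le> m" by (cases M) auto
    have sm: "sig x m \<le> t" unfolding M_def
      using not_less_Least[of m "\<lambda>M. t < sig x M"] Mm M_def by (metis lessI not_le_imp_less le_less)
    have tm: "t \<le> m + 2" using M le[rule_format, of M] Mm by simp
    have sn: "n + 2 \<le> sig x m" using sig_mono[OF mn, of x] eqn by simp
    obtain i where i: "1 \<le> i" "i < sig x m" "fac x i m = fac x (sig x m) m"
      using sig_props(2)[of x m] by blast
    define q where "q = sig x m - i"
    define t' where "t' = t - q"
    have t'b: "1 \<le> t'" "t' < t" "i \<le> t'" using i sm unfolding t'_def q_def by auto
    have "fac x t n = fac x t' n"
      unfolding fac_eq_iff
    proof (intro allI impI)
      fix k assume k: "k < n"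
      define k' where "k' = t' - i + k"
      have "k' < m" unfolding k'_def t'_def q_def using k tm sn sm i by linarith
      then have "x (i + k') = x (sig x m + k')" using i(3) unfolding fac_eq_iff by blast
      moreover have "i + k' = t' + k" "sig x m + k' = t + k"
        unfolding k'_def t'_def q_def using i sm t'b by (auto simp: t'_def q_def)
      ultimately show "x (t + k) = x (t' + k)" by simp
    qed
    moreover obtain j where "1 \<le> j" "j \<le> n + 1" "fac x t' n = fac x j n"
      using less.IH[OF t'b(2) t'b(1)] by blast
    ultimately show ?thesis by auto
  qed
qed

lemma p_le_cov:
  fixes x :: "nat \<Rightarrow> 'a::finite"
  assumes le: "\<forall>m. sig x m \<le> m + 2" and eqn: "sig x n = n + 2"
    and unb: "\<forall>t. \<exists>m. t < sig x m"
  shows "subword_complexity n x \<le> n + 1"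
proof -
  have "{fac x t n | t. 1 \<le> t} \<subseteq> (\<lambda>j. fac x j n) ` {1..n+1}"
    using covering[OF assms] by fastforce
  then have "card {fac x t n | t. 1 \<le> t} \<le> card ((\<lambda>j. fac x j n) ` {1..n+1})"
    by (rule card_mono[rotated]) simp
  also have "\<dots> \<le> card {1..n+1}" by (rule card_image_le) simp
  finally show ?thesis unfolding subword_complexity_def by simp
qed



lemma rec_le_iff:
  fixes x :: "nat \<Rightarrow> 'a::finite"
  shows "rec_fn n x \<le> 2 * n + 1 \<longleftrightarrow> sig x n \<le> n + 2"
  using sig_props(1,3)[where x=x and n=n] by linarith

lemma rec_eq_iff:
  fixes x :: "nat \<Rightarrow> 'a::finite"
  shows "rec_fn n x = 2 * n + 1 \<longleftrightarrow> sig x n = n + 2"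
  using sig_props(1,3)[where x=x and n=n] by linarith

theorem theorem2p4:
  fixes x :: "nat \<Rightarrow> 'a::finite"
  shows "sturmian x \<longleftrightarrow>
    ((\<forall>n\<ge>1. rec_fn n x \<le> 2 * n + 1) \<and> infinite {n. 1 \<le> n \<and> rec_fn n x = 2 * n + 1})"
proof
  assume st: "sturmian x"
  have pn: "subword_complexity n x = n + 1" if "1 \<le> n" for n
    using st that unfolding sturmian_def by blast
  have le: "sig x n \<le> n + 2" if n1: "1 \<le> n" for n
  proof -
    let ?f = "\<lambda>t. fac x t n"
    have "\<not> inj_on ?f {1..n+2}"
    proof
      assume inj: "inj_on ?f {1..n+2}"
      have "?f ` {1..n+2} \<subseteq> {fac x t n | t. 1 \<le> t}" by auto
      then have "card (?f ` {1..n+2}) \<le> card {fac x t n | t. 1 \<le> t}"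
        by (rule card_mono[rotated]) (rule finite_F)
      also have "\<dots> = n + 1" using pn[OF n1] unfolding subword_complexity_def .
      finally show False using card_image[OF inj] by simp
    qed
    then obtain a b where ab: "a \<in> {1..n+2}" "b \<in> {1..n+2}" "a \<noteq> b" "?f a = ?f b"
      unfolding inj_on_def by blast
    show ?thesis
    proof (cases "a < b")
      case True then show ?thesis using sig_le[of a b x n] ab by auto
    next
      case False then show ?thesis using sig_le[of b a x n] ab by auto
    qed
  qed
  show "(\<forall>n\<ge>1. rec_fn n x \<le> 2 * n + 1) \<and> infinite {n. 1 \<le> n \<and> rec_fn n x = 2 * n + 1}"
  proof
    show "\<forall>n\<ge>1. rec_fn n x \<le> 2 * n + 1" using le rec_le_iff by blast
    show "infinite {n. 1 \<le> n \<and> rec_fn n x = 2 * n + 1}"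
    proof
      assume fin: "finite {n. 1 \<le> n \<and> rec_fn n x = 2 * n + 1}"
      then obtain K where K: "{n. 1 \<le> n \<and> rec_fn n x = 2 * n + 1} \<subseteq> {..<K}"
        using finite_nat_set_iff_bounded[THEN iffD1, OF fin] by auto
      define N where "N = max K 1"
      have lt: "sig x n \<le> n + 1" if "N \<le> n" for n
      proof -
        have "1 \<le> n" "\<not> n < K" using that unfolding N_def by auto
        then have "rec_fn n x \<noteq> 2 * n + 1" using K by blast
        then have "sig x n \<noteq> n + 2" using rec_eq_iff by blast
        then show ?thesis using le[of n] \<open>1 \<le> n\<close> by simp
      qed
      have const: "sig x m = sig x N" if "N \<le> m" for m
        using that
      proof (induction m rule: dec_induct)
        case base then show ?case by simp
      next
        case (step m)
        have "sig x (Suc m) \<le> Suc m + 1" using lt[of "Suc m"] step by simp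
        then have "\<not> sig x m < sig x (Suc m)" using jump[of x m] by linarith
        then show ?case using sig_mono_Suc[of x m] step by simp
      qed
      have "uper x" by (rule sig_const_uper[of N x "sig x N"]) (use const in blast)
      then obtain C where C: "\<forall>n. subword_complexity n x \<le> C" using uper_p_bounded by blast
      have "subword_complexity (C + 1) x = C + 2" using pn[of "C + 1"] by simp
      moreover have "subword_complexity (C + 1) x \<le> C" using C by blast
      ultimately show False by simp
    qed
  qed
next
  assume H: "(\<forall>n\<ge>1. rec_fn n x \<le> 2 * n + 1) \<and> infinite {n. 1 \<le> n \<and> rec_fn n x = 2 * n + 1}"
  define S where "S = {n. 1 \<le> n \<and> rec_fn n x = 2 * n + 1}"
  have infS: "infinite S" using H unfolding S_def by blast
  have big: "\<exists>n\<in>S. t < n" for t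
  proof (rule ccontr)
    assume "\<not> ?thesis"
    then have "S \<subseteq> {..t}" by (auto simp: not_less)
    then show False using infS finite_subset by blast
  qed
  have Ssig: "sig x n = n + 2" if "n \<in> S" for n using that rec_eq_iff unfolding S_def by blast
  have le: "\<forall>m. sig x m \<le> m + 2"
  proof
    fix m show "sig x m \<le> m + 2"
    proof (cases "m = 0")
      case True
      have "sig x 0 \<le> 2" by (rule sig_le[of 1 2]) (auto simp: fac_def)
      then show ?thesis using True by simp
    next
      case False
      then have "rec_fn m x \<le> 2 * m + 1" using H by simp
      then show ?thesis using rec_le_iff[where x=x and n=m] by blast
    qed
  qed
  have unb: "\<forall>t. \<exists>m. t < sig x m"
  proof
    fix t obtain n where "n \<in> S" "t < n" using big by blast
    then show "\<exists>m. t < sig x m" using Ssig by (intro exI[of _ n]) auto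
  qed
  have nu: "\<not> uper x"
  proof
    assume "uper x"
    then obtain C where C: "\<forall>n. sig x n \<le> C" using uper_sig_bounded by blast
    obtain n where n: "n \<in> S" "C < n" using big by blast
    have "sig x n \<le> C" using C by blast
    moreover have "sig x n = n + 2" using Ssig n(1) by blast
    ultimately show False using n(2) by linarith
  qed
  show "sturmian x" unfolding sturmian_def
  proof (intro allI impI)
    fix n :: nat assume n1: "1 \<le> n"
    obtain n' where n': "n' \<in> S" "n < n'" using big by blast
    have "subword_complexity n' x \<le> n' + 1" by (rule p_le_cov[OF le Ssig[OF n'(1)] unb])
    moreover have "subword_complexity n x + (n' - n) \<le> subword_complexity n' x"
      by (rule p_gap[OF nu]) (use n' in simp)
    moreover have "n + 1 \<le> subword_complexity n x" by (rule p_ge[OF nu])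
    ultimately show "subword_complexity n x = n + 1" using n' by linarith
  qed
qed


end
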